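(* Let $G$ be a connected graph with $n$ vertices and $k\ge1$. Let $W_k(G)$ be the sum of the spanning tree weights of all connected $k$-partitions of $G$. Then $$n^{-2(k-1)}\le \frac{W_k(G)}{\tau(G)}\le n^{2(k-1)}.$$
   Context: A connected $k$-partition of $G=(V,E)$ is a partition of $V$ into $k$ nonempty sets (pieces) each inducing a connected subgraph. For a graph $H$, $\tau(H)$ is its number of spanning trees, and the spanning tree weight of a connected partition $P$ is $\prod_{S\in P}\tau(G[S])$. *)

theory Defs
  imports Complex_Main
begin

definition graph :: "'a set \<Rightarrow> 'a set set \<Rightarrow> bool" where
  "graph V E \<longleftrightarrow> finite V \<and> (\<forall>e\<in>E. e \<subseteq> V \<and> card e = 2)"

definition adj :: "'a set set \<Rightarrow> ('a \<times> 'a) set" where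
  "adj E = {(u, v). {u, v} \<in> E}"

definition connected_graph :: "'a set \<Rightarrow> 'a set set \<Rightarrow> bool" where
  "connected_graph V E \<longleftrightarrow> V \<noteq> {} \<and> (\<forall>u\<in>V. \<forall>v\<in>V. (u, v) \<in> (adj {e\<in>E. e \<subseteq> V})\<^sup>*)"

definition induced_edges :: "'a set set \<Rightarrow> 'a set \<Rightarrow> 'a set set" where
  "induced_edges E S = {e\<in>E. e \<subseteq> S}"

definition spanning_tree :: "'a set \<Rightarrow> 'a set set \<Rightarrow> 'a set set \<Rightarrow> bool" where
  "spanning_tree V E T \<longleftrightarrow> T \<subseteq> E \<and> connected_graph V T \<and> card T = card V - 1"

definition num_spanning_trees :: "'a set \<Rightarrow> 'a set set \<Rightarrow> nat" ("\<tau>") where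
  "\<tau> V E = card {T. spanning_tree V E T}"

definition connected_partition :: "'a set \<Rightarrow> 'a set set \<Rightarrow> nat \<Rightarrow> 'a set set \<Rightarrow> bool" where
  "connected_partition V E k P \<longleftrightarrow>
     \<Union>P = V \<and> (\<forall>S\<in>P. S \<noteq> {}) \<and> (\<forall>S\<in>P. \<forall>S'\<in>P. S \<noteq> S' \<longrightarrow> S \<inter> S' = {})
     \<and> finite P \<and> card P = k \<and> (\<forall>S\<in>P. connected_graph S (induced_edges E S))"

definition spanning_tree_weight :: "'a set set \<Rightarrow> 'a set set \<Rightarrow> nat" where
  "spanning_tree_weight E P = (\<Prod>S\<in>P. \<tau> S (induced_edges E S))"

definition W :: "nat \<Rightarrow> 'a set \<Rightarrow> 'a set set \<Rightarrow> nat" where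
  "W k V E = (\<Sum>P\<in>{P. connected_partition V E k P}. spanning_tree_weight E P)"

end

theory Submission
  imports Defs "HOL-Library.FuncSet"
begin


lemma adj_sym: "(u,v) \<in> adj F \<longleftrightarrow> (v,u) \<in> adj F"
  by (auto simp: adj_def insert_commute)

lemma adj_conv: "(adj F)\<inverse> = adj F"
  by (auto simp: adj_def insert_commute)

lemma reach_sym: "(u,v) \<in> (adj F)\<^sup>* \<Longrightarrow> (v,u) \<in> (adj F)\<^sup>*"
  by (metis adj_conv rtrancl_converseI)

lemma adj_mono: "F \<subseteq> F' \<Longrightarrow> adj F \<subseteq> adj F'"
  by (auto simp: adj_def)

lemma reach_mono: "(u,v) \<in> (adj F)\<^sup>* \<Longrightarrow> F \<subseteq> F' \<Longrightarrow> (u,v) \<in> (adj F')\<^sup>*"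
  by (meson adj_mono rtrancl_mono subsetD)

lemma reach_closed:
  assumes "(u,w) \<in> (adj F)\<^sup>*" "u \<in> A" "\<And>a b. {a,b} \<in> F \<Longrightarrow> a \<in> A \<Longrightarrow> b \<in> A"
  shows "w \<in> A \<and> (u,w) \<in> (adj {e\<in>F. e \<subseteq> A})\<^sup>*"
  using assms(1)
proof (induction rule: rtrancl_induct)
  case base
  then show ?case using assms(2) by simp
next
  case (step y z)
  then have e: "{y,z} \<in> F" by (simp add: adj_def)
  with step assms(3) have z: "z \<in> A" by blast
  with step e have "(y,z) \<in> adj {e\<in>F. e \<subseteq> A}" by (simp add: adj_def)
  with step z show ?case by (meson rtrancl.rtrancl_into_rtrancl)
qed

lemma reach_exit:
  assumes "(u,v) \<in> R\<^sup>*" "u \<in> A" "v \<notin> A"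
  shows "\<exists>a b. (a,b) \<in> R \<and> a \<in> A \<and> b \<notin> A"
  using assms by (induction rule: rtrancl_induct) auto

lemma reach_two:
  assumes "(x,w) \<in> (adj T)\<^sup>*"
  shows "(x,w) \<in> (adj (T - {{x,y}}))\<^sup>* \<or> (y,w) \<in> (adj (T - {{x,y}}))\<^sup>*"
  using assms
proof (induction rule: rtrancl_induct)
  case base
  then show ?case by simp
next
  case (step a b)
  then have e: "{a,b} \<in> T" by (simp add: adj_def)
  show ?case
  proof (cases "{a,b} = {x,y}")
    case True
    then have "b = x \<or> b = y" by (metis doubleton_eq_iff)
    then show ?thesis by auto
  next
    case False
    with e have "(a,b) \<in> adj (T - {{x,y}})" by (simp add: adj_def)
    with step.IH show ?thesis by (meson rtrancl.rtrancl_into_rtrancl)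
  qed
qed

lemma conn_iff: "T \<subseteq> Pow S \<Longrightarrow> connected_graph S T \<longleftrightarrow> S \<noteq> {} \<and> (\<forall>u\<in>S. \<forall>v\<in>S. (u,v) \<in> (adj T)\<^sup>*)"
proof -
  assume "T \<subseteq> Pow S"
  then have "{e\<in>T. e \<subseteq> S} = T" by auto
  then show ?thesis by (simp add: connected_graph_def)
qed

lemma conn_mono:
  assumes c: "connected_graph S T" and sub: "T \<subseteq> T'" shows "connected_graph S T'"
proof -
  have s: "{e\<in>T. e \<subseteq> S} \<subseteq> {e\<in>T'. e \<subseteq> S}" using sub by auto
  have "(u,v) \<in> (adj {e\<in>T'. e \<subseteq> S})\<^sup>*" if "u \<in> S" "v \<in> S" for u v
  proof -
    have "(u,v) \<in> (adj {e\<in>T. e \<subseteq> S})\<^sup>*" using c that unfolding connected_graph_def by simp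
    then show ?thesis by (rule reach_mono[OF _ s])
  qed
  then show ?thesis using c unfolding connected_graph_def by simp
qed

lemma count_lemma:
  assumes fin: "finite T" and c: "connected_graph S T"
  shows "card S - 1 \<le> card T"
proof -
  define R where "R = adj {e\<in>T. e \<subseteq> S}"
  from c obtain u where u: "u \<in> S" unfolding connected_graph_def by blast
  have reach: "\<And>w. w \<in> S \<Longrightarrow> (u,w) \<in> R\<^sup>*" using c u unfolding connected_graph_def R_def by blast
  define d where "d w = (LEAST m. (u,w) \<in> R ^^ m)" for w
  have dP: "(u,w) \<in> R ^^ d w" if "w \<in> S" for w
    using reach[OF that] unfolding d_def rtrancl_power by (meson LeastI)
  have dmin: "(u,w) \<in> R ^^ m \<Longrightarrow> d w \<le> m" for w m
    unfolding d_def by (rule Least_le)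
  define g where "g w = (SOME e. \<exists>x. e = {x,w} \<and> (u,x) \<in> R ^^ (d w - 1) \<and> (x,w) \<in> R)" for w
  have gP: "\<exists>x. g w = {x,w} \<and> (u,x) \<in> R ^^ (d w - 1) \<and> (x,w) \<in> R \<and> 0 < d w" if "w \<in> S - {u}" for w
  proof -
    have "d w \<noteq> 0" using dP[of w] that by (cases "d w") auto
    then obtain m where m: "d w = Suc m" by (cases "d w") auto
    from dP[of w] that m obtain x where "(u,x) \<in> R ^^ m" "(x,w) \<in> R"
      by (auto elim: relpow_Suc_E)
    then have "\<exists>e. \<exists>x. e = {x,w} \<and> (u,x) \<in> R ^^ (d w - 1) \<and> (x,w) \<in> R" using m by auto
    then have "\<exists>x. g w = {x,w} \<and> (u,x) \<in> R ^^ (d w - 1) \<and> (x,w) \<in> R"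
      unfolding g_def by (rule someI_ex)
    then show ?thesis using m by auto
  qed
  have inj: "inj_on g (S - {u})"
  proof (rule inj_onI)
    fix w1 w2 assume w1: "w1 \<in> S - {u}" and w2: "w2 \<in> S - {u}" and eq: "g w1 = g w2"
    show "w1 = w2"
    proof (rule ccontr)
      assume ne: "w1 \<noteq> w2"
      obtain x1 where x1: "g w1 = {x1,w1}" "(u,x1) \<in> R ^^ (d w1 - 1)" "0 < d w1" using gP[OF w1] by blast
      obtain x2 where x2: "g w2 = {x2,w2}" "(u,x2) \<in> R ^^ (d w2 - 1)" "0 < d w2" using gP[OF w2] by blast
      from eq x1 x2 ne have "x1 = w2" "x2 = w1" by (metis doubleton_eq_iff)+
      with x1 x2 dmin have "d w2 \<le> d w1 - 1" "d w1 \<le> d w2 - 1" by auto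
      with x1 x2 show False by linarith
    qed
  qed
  have img: "g ` (S - {u}) \<subseteq> T"
  proof
    fix e assume "e \<in> g ` (S - {u})"
    then obtain w where w: "w \<in> S - {u}" "e = g w" by blast
    from gP[OF w(1)] obtain x where "g w = {x,w}" "(x,w) \<in> R" by blast
    then show "e \<in> T" using w unfolding R_def adj_def by auto
  qed
  have "card (S - {u}) \<le> card T" by (rule card_inj_on_le[OF inj img fin])
  then show ?thesis using u by (simp add: card_Diff_singleton)
qed



definition ST :: "'a set set \<Rightarrow> 'a set \<Rightarrow> 'a set set set" where
  "ST E S = {T. spanning_tree S (induced_edges E S) T}"

definition Obj :: "nat \<Rightarrow> 'a set \<Rightarrow> 'a set set \<Rightarrow> ('a set set \<times> ('a set \<Rightarrow> 'a set set)) set" where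
  "Obj k V E = Sigma {P. connected_partition V E k P} (\<lambda>P. PiE P (ST E))"

definition pc :: "'a set set \<Rightarrow> 'a \<Rightarrow> 'a set" where
  "pc P x = (THE S. S \<in> P \<and> x \<in> S)"

definition merge where
  "merge Q x y = (let P = fst Q; f = snd Q; A = pc P x; B = pc P y in
     (P - {A,B} \<union> {A \<union> B}, (f(A:=undefined, B:=undefined))(A \<union> B := f A \<union> f B \<union> {{x,y}})))"

definition split where
  "split Q x y = (let P = fst Q; f = snd Q; S = pc P x; F = f S - {{x,y}};
     A = {w\<in>S. (x,w) \<in> (adj F)\<^sup>*}; B = S - A in
     (P - {S} \<union> {A,B}, (f(S:=undefined))(A := {e\<in>F. e \<subseteq> A}, B := {e\<in>F. e \<subseteq> B})))"

lemma pc_eq: "connected_partition V E k P \<Longrightarrow> S \<in> P \<Longrightarrow> x \<in> S \<Longrightarrow> pc P x = S"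
  unfolding pc_def connected_partition_def by (rule the_equality) auto

lemma graph_edge: "graph V E \<Longrightarrow> e \<in> E \<Longrightarrow> \<exists>a b. a \<noteq> b \<and> e = {a,b} \<and> a \<in> V \<and> b \<in> V"
  unfolding graph_def by (metis card_2_iff insert_subset)

lemma graph_finE: "graph V E \<Longrightarrow> finite E"
  unfolding graph_def by (meson Pow_iff finite_Pow_iff rev_finite_subset subsetI)

lemma ST_D: "T \<in> ST E S \<Longrightarrow> T \<subseteq> E \<and> T \<subseteq> Pow S \<and> connected_graph S T \<and> card T = card S - 1"
  unfolding ST_def spanning_tree_def induced_edges_def by auto

lemma ST_I: "T \<subseteq> E \<Longrightarrow> T \<subseteq> Pow S \<Longrightarrow> connected_graph S T \<Longrightarrow> card T = card S - 1 \<Longrightarrow> T \<in> ST E S"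
  unfolding ST_def spanning_tree_def induced_edges_def by auto

lemma ST_conn: "T \<in> ST E S \<Longrightarrow> connected_graph S (induced_edges E S)"
  unfolding ST_def spanning_tree_def by (auto intro: conn_mono)



lemma split_ok:
  assumes G: "graph V E" and o: "(P,f) \<in> Obj k V E" and S: "S \<in> P" and e: "{x,y} \<in> f S"
  shows "split (P,f) x y \<in> Obj (Suc k) V E \<and> merge (split (P,f) x y) x y = (P,f)"
proof -
  from o have cp: "connected_partition V E k P" and fP: "f \<in> PiE P (ST E)"
    unfolding Obj_def by auto
  define T where "T = f S"
  have TST: "T \<in> ST E S" using fP S T_def by auto
  note TD = ST_D[OF TST]
  have finE: "finite E" using G by (rule graph_finE)
  have finT: "finite T" using TD finE finite_subset by blast
  have SV: "S \<subseteq> V" using cp S unfolding connected_partition_def by auto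
  have finS: "finite S" using G SV unfolding graph_def using finite_subset by blast
  have eT: "{x,y} \<in> T" using e T_def by simp
  have xy: "x \<noteq> y" "x \<in> S" "y \<in> S" using graph_edge[OF G, of "{x,y}"] eT TD
    by (auto simp: doubleton_eq_iff)
  have pcx: "pc P x = S" using pc_eq[OF cp S xy(2)] .
  define F where "F = T - {{x,y}}"
  define A where "A = {w\<in>S. (x,w) \<in> (adj F)\<^sup>*}"
  define B where "B = S - A"
  define FA where "FA = {e\<in>F. e \<subseteq> A}"
  define FB where "FB = {e\<in>F. e \<subseteq> B}"
  define P' where "P' = P - {S} \<union> {A,B}"
  define f' where "f' = (f(S:=undefined))(A := FA, B := FB)"
  have spl: "split (P,f) x y = (P', f')"
    unfolding split_def Let_def fst_conv snd_conv pcx P'_def f'_def FA_def FB_def B_def A_def F_def T_def by simp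
  have edgeE: "\<And>e. e \<in> T \<Longrightarrow> \<exists>a b. a \<noteq> b \<and> e = {a,b}" using graph_edge[OF G] TD by blast
  have FS: "F \<subseteq> Pow S" using TD F_def by auto
  have reachT: "\<And>w. w \<in> S \<Longrightarrow> (x,w) \<in> (adj T)\<^sup>*" using TD xy conn_iff by metis
  have clA: "\<And>a b. {a,b} \<in> F \<Longrightarrow> a \<in> A \<Longrightarrow> b \<in> A"
  proof -
    fix a b assume ab: "{a,b} \<in> F" "a \<in> A"
    then have "b \<in> S" using FS by auto
    moreover have "(a,b) \<in> adj F" using ab by (simp add: adj_def)
    ultimately show "b \<in> A" using ab unfolding A_def by (auto intro: rtrancl_into_rtrancl)
  qed
  have xA: "x \<in> A" unfolding A_def using xy by simp
  have cardF: "card F = card T - 1" using eT finT F_def by simp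
  have yA: "y \<notin> A"
  proof
    assume "y \<in> A"
    then have xyr: "(x,y) \<in> (adj F)\<^sup>*" unfolding A_def by simp
    have "\<forall>u\<in>S. \<forall>v\<in>S. (u,v) \<in> (adj F)\<^sup>*"
    proof (intro ballI)
      fix u v assume "u \<in> S" "v \<in> S"
      have r: "(x,w) \<in> (adj F)\<^sup>*" if "w \<in> S" for w
        using reach_two[OF reachT[OF that], of y] xyr F_def by (meson rtrancl_trans)
      show "(u,v) \<in> (adj F)\<^sup>*" using r[OF \<open>u\<in>S\<close>] r[OF \<open>v\<in>S\<close>] reach_sym rtrancl_trans by metis
    qed
    then have "connected_graph S F" using conn_iff[OF FS] xy by auto
    then have "card S - 1 \<le> card F" using count_lemma finT F_def by auto
    moreover have "card S \<ge> 2" using xy finS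
      by (metis card_2_iff card_mono empty_subsetI insert_subset)
    ultimately show False using cardF TD by linarith
  qed
  have yB: "y \<in> B" using yA xy B_def by simp
  have reachB: "(y,w) \<in> (adj F)\<^sup>*" if wB: "w \<in> B" for w
  proof -
    have wS: "w \<in> S" and wA: "w \<notin> A" using wB B_def by auto
    have "(x,w) \<in> (adj F)\<^sup>* \<or> (y,w) \<in> (adj F)\<^sup>*"
      using reach_two[OF reachT[OF wS], of y] unfolding F_def .
    then show ?thesis using wS wA unfolding A_def by auto
  qed
  have clB: "\<And>a b. {a,b} \<in> F \<Longrightarrow> a \<in> B \<Longrightarrow> b \<in> B"
  proof -
    fix a b assume ab: "{a,b} \<in> F" "a \<in> B"
    then have "b \<in> S" using FS by auto
    moreover have "b \<notin> A" using clA[of b a] ab B_def by (auto simp: insert_commute)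
    ultimately show "b \<in> B" using B_def by simp
  qed
  have AS: "A \<subseteq> S" "B \<subseteq> S" "A \<inter> B = {}" "A \<union> B = S" using A_def B_def by auto
  have connA: "connected_graph A FA"
  proof -
    have "(x,w) \<in> (adj FA)\<^sup>*" if "w \<in> A" for w
      using reach_closed[of x w F A] clA xA that FA_def A_def by auto
    then have "\<forall>u\<in>A. \<forall>v\<in>A. (u,v) \<in> (adj FA)\<^sup>*" using reach_sym rtrancl_trans by metis
    moreover have "FA \<subseteq> Pow A" using FA_def by auto
    ultimately show ?thesis using conn_iff xA by blast
  qed
  have connB: "connected_graph B FB"
  proof -
    have "(y,w) \<in> (adj FB)\<^sup>*" if "w \<in> B" for w
      using reach_closed[of y w F B] clB yB that reachB FB_def by auto
    then have "\<forall>u\<in>B. \<forall>v\<in>B. (u,v) \<in> (adj FB)\<^sup>*" using reach_sym rtrancl_trans by metis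
    moreover have "FB \<subseteq> Pow B" using FB_def by auto
    ultimately show ?thesis using conn_iff yB by blast
  qed
  have Fsplit: "F = FA \<union> FB"
  proof
    show "F \<subseteq> FA \<union> FB"
    proof
      fix e assume eF: "e \<in> F"
      then obtain a b where ab: "e = {a,b}" using edgeE F_def by blast
      then have "a \<in> S" using eF FS by auto
      then have "a \<in> A \<or> a \<in> B" using B_def by auto
      then show "e \<in> FA \<union> FB"
        using clA[of a b] clB[of a b] eF ab FA_def FB_def by auto
    qed
  qed (auto simp: FA_def FB_def)
  have Fdisj: "FA \<inter> FB = {}"
  proof -
    have "e = {}" if "e \<in> FA" "e \<in> FB" for e using that AS FA_def FB_def by auto
    moreover have "{} \<notin> F" using edgeE F_def by blast
    ultimately show ?thesis using FA_def by auto
  qed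
  have finA: "finite FA" "finite FB" using finT F_def FA_def FB_def by auto
  have cardAB: "card A + card B = card S" using AS finS
    by (metis card_Un_disjoint finite_subset)
  have finAB: "finite A" "finite B" using finS AS finite_subset by blast+
  have cA1: "card A \<ge> 1" "card B \<ge> 1" using xA yB finAB
    by (auto simp: Suc_le_eq card_gt_0_iff)
  have cFAB: "card FA + card FB = card S - 2" using Fsplit Fdisj finA cardF TD
    by (metis card_Un_disjoint diff_diff_left one_add_one)
  have "card A - 1 \<le> card FA" using count_lemma finA connA by blast
  moreover have "card B - 1 \<le> card FB" using count_lemma finA connB by blast
  ultimately have cards: "card FA = card A - 1" "card FB = card B - 1"
    using cardAB cA1 cFAB by linarith+
  have FE: "F \<subseteq> E" using TD F_def by auto
  have FAST: "FA \<in> ST E A" using ST_I[of FA E A] FE connA cards FA_def by auto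
  have FBST: "FB \<in> ST E B" using ST_I[of FB E B] FE connB cards FB_def by auto
  have disjP: "\<And>S1 S2. S1 \<in> P \<Longrightarrow> S2 \<in> P \<Longrightarrow> S1 \<noteq> S2 \<Longrightarrow> S1 \<inter> S2 = {}"
    using cp unfolding connected_partition_def by blast
  have AnP: "A \<notin> P" using disjP[OF S] AS xA yB by blast
  have BnP: "B \<notin> P" using disjP[OF S] AS xA yB by blast
  have AB: "A \<noteq> B" using xA AS by auto
  have finP: "finite P" and cardP: "card P = k" using cp unfolding connected_partition_def by auto
  have cp': "connected_partition V E (Suc k) P'"
    unfolding connected_partition_def
  proof (intro conjI)
    have UP: "\<Union>P = V" using cp unfolding connected_partition_def by simp
    have "\<Union>P' = \<Union>(P - {S}) \<union> A \<union> B" by (auto simp: P'_def)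
    moreover have "\<Union>P = \<Union>(P - {S}) \<union> S" using S by blast
    ultimately show "\<Union>P' = V" using UP AS by auto
    have ne: "\<forall>S\<in>P. S \<noteq> {}" using cp unfolding connected_partition_def by simp
    show "\<forall>S\<in>P'. S \<noteq> {}" using ne xA yB unfolding P'_def by auto
    show "\<forall>S1\<in>P'. \<forall>S2\<in>P'. S1 \<noteq> S2 \<longrightarrow> S1 \<inter> S2 = {}"
    proof (intro ballI impI)
      fix S1 S2 assume S1: "S1 \<in> P'" and S2: "S2 \<in> P'" and ne: "S1 \<noteq> S2"
      have o1: "Z \<inter> A = {}" "Z \<inter> B = {}" if "Z \<in> P - {S}" for Z
      proof -
        have "Z \<inter> S = {}" using that disjP S by auto
        then show "Z \<inter> A = {}" "Z \<inter> B = {}" using AS by auto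
      qed
      consider "S1 \<in> P - {S}" "S2 \<in> P - {S}" | "S1 \<in> {A,B}" "S2 \<in> P - {S}"
        | "S1 \<in> P - {S}" "S2 \<in> {A,B}" | "S1 \<in> {A,B}" "S2 \<in> {A,B}"
        using S1 S2 P'_def by auto
      then show "S1 \<inter> S2 = {}"
      proof cases
        case 1 then show ?thesis using disjP ne by auto
      next
        case 2 then show ?thesis using o1[OF 2(2)] by auto
      next
        case 3 then show ?thesis using o1[OF 3(1)] by auto
      next
        case 4 then show ?thesis using ne AS by auto
      qed
    qed
    show "finite P'" using finP P'_def by simp
    have "P' = insert A (insert B (P - {S}))" using P'_def by auto
    moreover have "card (P - {S}) = k - 1" using cardP S by (simp add: card_Diff_singleton)
    moreover have "k \<ge> 1" using cardP S finP by (metis card_0_eq empty_iff less_one not_le)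
    ultimately show "card P' = Suc k" using AnP BnP AB finP by simp
    have cc: "\<forall>S\<in>P. connected_graph S (induced_edges E S)" using cp unfolding connected_partition_def by simp
    show "\<forall>S\<in>P'. connected_graph S (induced_edges E S)"
      unfolding P'_def using cc ST_conn[OF FAST] ST_conn[OF FBST] by auto
  qed
  have f'P: "f' \<in> PiE P' (ST E)"
  proof -
    have "\<And>Z. Z \<in> P' \<Longrightarrow> f' Z \<in> ST E Z" using fP FAST FBST AB unfolding P'_def f'_def by auto
    moreover have "\<And>Z. Z \<notin> P' \<Longrightarrow> f' Z = undefined" using fP AB unfolding P'_def f'_def by auto
    ultimately show ?thesis by (auto simp: PiE_def extensional_def)
  qed
  have obj: "(P',f') \<in> Obj (Suc k) V E" using cp' f'P unfolding Obj_def by auto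
  have pcx': "pc P' x = A" using pc_eq[OF cp' _ xA] P'_def by simp
  have pcy': "pc P' y = B" using pc_eq[OF cp' _ yB] P'_def by simp
  have P'back: "P' - {A,B} \<union> {A \<union> B} = P" using AnP BnP S AS unfolding P'_def by auto
  have f'A: "f' A = FA" "f' B = FB" using AB f'_def by auto
  have Tback: "FA \<union> FB \<union> {{x,y}} = T" using Fsplit F_def eT by auto
  have fback: "(f'(A:=undefined, B:=undefined))(A \<union> B := f' A \<union> f' B \<union> {{x,y}}) = f"
  proof
    fix Z
    show "((f'(A:=undefined, B:=undefined))(A \<union> B := f' A \<union> f' B \<union> {{x,y}})) Z = f Z"
      using f'A Tback AS T_def fP AnP BnP unfolding f'_def by (auto simp: PiE_def extensional_def)
  qed
  have "merge (P',f') x y = (P,f)"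
    unfolding merge_def Let_def using pcx' pcy' P'back fback by simp
  then show ?thesis using spl obj by simp
qed



lemma merge_ok:
  assumes G: "graph V E" and o: "(P,f) \<in> Obj (Suc k) V E" and A: "A \<in> P" and B: "B \<in> P"
    and AB: "A \<noteq> B" and x: "x \<in> A" and y: "y \<in> B" and e: "{x,y} \<in> E"
  shows "merge (P,f) x y \<in> Obj k V E \<and> split (merge (P,f) x y) x y = (P,f)"
proof -
  from o have cp: "connected_partition V E (Suc k) P" and fP: "f \<in> PiE P (ST E)"
    unfolding Obj_def by auto
  have disjP: "\<And>S1 S2. S1 \<in> P \<Longrightarrow> S2 \<in> P \<Longrightarrow> S1 \<noteq> S2 \<Longrightarrow> S1 \<inter> S2 = {}"
    using cp unfolding connected_partition_def by blast
  have ABd: "A \<inter> B = {}" using disjP A B AB by blast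
  have pcx: "pc P x = A" using pc_eq[OF cp A x] .
  have pcy: "pc P y = B" using pc_eq[OF cp B y] .
  define C where "C = A \<union> B"
  define TC where "TC = f A \<union> f B \<union> {{x,y}}"
  define P' where "P' = P - {A,B} \<union> {C}"
  define f' where "f' = (f(A:=undefined, B:=undefined))(C := TC)"
  have mer: "merge (P,f) x y = (P', f')"
    unfolding merge_def Let_def fst_conv snd_conv pcx pcy P'_def f'_def TC_def C_def by simp
  have finE: "finite E" using G by (rule graph_finE)
  have fA: "f A \<in> ST E A" "f B \<in> ST E B" using fP A B by auto
  note DA = ST_D[OF fA(1)] and DB = ST_D[OF fA(2)]
  have finf: "finite (f A)" "finite (f B)" using DA DB finE finite_subset by blast+
  have edgeE: "\<And>e. e \<in> E \<Longrightarrow> \<exists>a b. a \<noteq> b \<and> e = {a,b}" using graph_edge[OF G] by blast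
  have noempty: "{} \<notin> E" using edgeE by blast
  have CnP: "C \<notin> P"
  proof
    assume "C \<in> P"
    moreover have "C \<noteq> A" using C_def ABd y by auto
    ultimately have "C \<inter> A = {}" using disjP A by blast
    then show False using x C_def by auto
  qed
  have TCsub: "TC \<subseteq> E" "TC \<subseteq> Pow C" using DA DB e C_def TC_def x y by auto
  have reachA: "\<And>w. w \<in> A \<Longrightarrow> (x,w) \<in> (adj (f A))\<^sup>*" using DA x conn_iff by metis
  have reachB: "\<And>w. w \<in> B \<Longrightarrow> (y,w) \<in> (adj (f B))\<^sup>*" using DB y conn_iff by metis
  have connC: "connected_graph C TC"
  proof -
    have r: "(x,w) \<in> (adj TC)\<^sup>*" if "w \<in> C" for w
    proof (cases "w \<in> A")
      case True
      then show ?thesis using reachA reach_mono TC_def by (metis Un_upper1 le_supI1)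
    next
      case False
      then have "w \<in> B" using that C_def by auto
      then have "(y,w) \<in> (adj TC)\<^sup>*" using reachB reach_mono TC_def by (metis Un_upper2 le_supI1)
      moreover have "(x,y) \<in> adj TC" using TC_def by (simp add: adj_def)
      ultimately show ?thesis by (meson converse_rtrancl_into_rtrancl)
    qed
    then have "\<forall>u\<in>C. \<forall>v\<in>C. (u,v) \<in> (adj TC)\<^sup>*" using reach_sym rtrancl_trans by metis
    then show ?thesis using conn_iff[OF TCsub(2)] x C_def by auto
  qed
  have fABd: "f A \<inter> f B = {}"
  proof -
    have "e = {}" if "e \<in> f A" "e \<in> f B" for e using that ABd DA DB by blast
    then show ?thesis using noempty DA by auto
  qed
  have xyA: "{x,y} \<notin> f A" using DA y ABd by auto
  have xyB: "{x,y} \<notin> f B" using DB x ABd by auto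
  have finA: "finite A" "finite B" using cp A B G unfolding connected_partition_def graph_def
    by (meson Union_upper finite_subset)+
  have cA1: "card A \<ge> 1" "card B \<ge> 1" using x y finA
    by (auto simp: Suc_le_eq card_gt_0_iff)
  have cardC: "card C = card A + card B" using C_def finA ABd by (simp add: card_Un_disjoint)
  have cardTC: "card TC = card C - 1"
  proof -
    have "card TC = card (f A) + card (f B) + 1" unfolding TC_def using finf fABd xyA xyB
      by (simp add: card_Un_disjoint)
    then show ?thesis using DA DB cardC cA1 by linarith
  qed
  have TCST: "TC \<in> ST E C" using ST_I TCsub connC cardTC by blast
  have finP: "finite P" and cardP: "card P = Suc k" using cp unfolding connected_partition_def by auto
  have cp': "connected_partition V E k P'"
    unfolding connected_partition_def
  proof (intro conjI)
    have UP: "\<Union>P = V" using cp unfolding connected_partition_def by simp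
    have "\<Union>P' = \<Union>(P - {A,B}) \<union> A \<union> B" by (auto simp: P'_def C_def)
    moreover have "\<Union>P = \<Union>(P - {A,B}) \<union> A \<union> B" using A B by blast
    ultimately show "\<Union>P' = V" using UP by simp
    have ne: "\<forall>S\<in>P. S \<noteq> {}" using cp unfolding connected_partition_def by simp
    show "\<forall>S\<in>P'. S \<noteq> {}" using ne x unfolding P'_def C_def by auto
    show "\<forall>S1\<in>P'. \<forall>S2\<in>P'. S1 \<noteq> S2 \<longrightarrow> S1 \<inter> S2 = {}"
    proof (intro ballI impI)
      fix S1 S2 assume S1: "S1 \<in> P'" and S2: "S2 \<in> P'" and ne: "S1 \<noteq> S2"
      have o1: "Z \<inter> C = {}" if "Z \<in> P - {A,B}" for Z
      proof -
        have "Z \<inter> A = {}" "Z \<inter> B = {}" using that disjP A B by auto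
        then show ?thesis unfolding C_def by auto
      qed
      show "S1 \<inter> S2 = {}"
      proof (cases "S1 = C")
        case True
        then have "S2 \<in> P - {A,B}" using S2 ne P'_def by auto
        then show ?thesis using o1 True by auto
      next
        case False
        then have s1: "S1 \<in> P - {A,B}" using S1 P'_def by auto
        show ?thesis
        proof (cases "S2 = C")
          case True
          then show ?thesis using o1[OF s1] by auto
        next
          case False
          then have "S2 \<in> P - {A,B}" using S2 P'_def by auto
          then show ?thesis using s1 disjP ne by auto
        qed
      qed
    qed
    show "finite P'" using finP P'_def by simp
    have "card (P - {A,B}) = Suc k - 2" using cardP A B AB finP by (simp add: card_Diff_subset)
    moreover have "P' = insert C (P - {A,B})" using P'_def by auto
    moreover have "card {A,B} \<le> card P" using A B finP by (intro card_mono) auto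
    ultimately show "card P' = k" using CnP finP AB cardP by simp
    have cc: "\<forall>S\<in>P. connected_graph S (induced_edges E S)" using cp unfolding connected_partition_def by simp
    show "\<forall>S\<in>P'. connected_graph S (induced_edges E S)"
      unfolding P'_def using cc ST_conn[OF TCST] by auto
  qed
  have f'P: "f' \<in> PiE P' (ST E)"
  proof -
    have "\<And>Z. Z \<in> P' \<Longrightarrow> f' Z \<in> ST E Z" using fP TCST unfolding P'_def f'_def by auto
    moreover have "\<And>Z. Z \<notin> P' \<Longrightarrow> f' Z = undefined" using fP unfolding P'_def f'_def by auto
    ultimately show ?thesis by (auto simp: PiE_def extensional_def)
  qed
  have obj: "(P',f') \<in> Obj k V E" using cp' f'P unfolding Obj_def by auto
  have xC: "x \<in> C" using x C_def by simp
  have pcx': "pc P' x = C" using pc_eq[OF cp' _ xC] P'_def by simp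
  have f'C: "f' C = TC" using f'_def by simp
  define F where "F = TC - {{x,y}}"
  have FAB: "F = f A \<union> f B" using F_def TC_def xyA xyB by auto
  have Aback: "{w\<in>C. (x,w) \<in> (adj F)\<^sup>*} = A"
  proof
    show "A \<subseteq> {w\<in>C. (x,w) \<in> (adj F)\<^sup>*}"
    proof
      fix w assume w: "w \<in> A"
      have "(x,w) \<in> (adj F)\<^sup>*" using reach_mono[OF reachA[OF w]] FAB by blast
      then show "w \<in> {w\<in>C. (x,w) \<in> (adj F)\<^sup>*}" using w C_def by simp
    qed
    have cl: "\<And>a b. {a,b} \<in> F \<Longrightarrow> a \<in> A \<Longrightarrow> b \<in> A"
    proof -
      fix a b assume ab: "{a,b} \<in> F" "a \<in> A"
      show "b \<in> A"
      proof (cases "{a,b} \<in> f A")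
        case True
        then show ?thesis using DA by auto
      next
        case False
        then have "{a,b} \<in> f B" using ab FAB by simp
        then have "a \<in> B" using DB by auto
        then show ?thesis using ab ABd by auto
      qed
    qed
    show "{w\<in>C. (x,w) \<in> (adj F)\<^sup>*} \<subseteq> A"
    proof
      fix w assume "w \<in> {w\<in>C. (x,w) \<in> (adj F)\<^sup>*}"
      then have r: "(x,w) \<in> (adj F)\<^sup>*" by simp
      show "w \<in> A" using reach_closed[OF r x cl] by simp
    qed
  qed
  have Bback: "C - A = B" using C_def ABd by auto
  have FAback: "{e\<in>F. e \<subseteq> A} = f A"
  proof -
    have "e \<notin> f B" if eY: "e \<subseteq> A" for e
    proof
      assume "e \<in> f B"
      then have "e \<subseteq> B" "e \<in> E" using DB by auto
      with eY ABd have "e = {}" "e \<in> E" by blast+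
      with noempty show False by simp
    qed
    then show ?thesis using FAB DA by auto
  qed
  have FBback: "{e\<in>F. e \<subseteq> B} = f B"
  proof -
    have "e \<notin> f A" if eY: "e \<subseteq> B" for e
    proof
      assume "e \<in> f A"
      then have "e \<subseteq> A" "e \<in> E" using DA by auto
      with eY ABd have "e = {}" "e \<in> E" by blast+
      with noempty show False by simp
    qed
    then show ?thesis using FAB DB by auto
  qed
  have Pback: "P' - {C} \<union> {A,B} = P" using CnP A B unfolding P'_def by auto
  have fback: "(f'(C:=undefined))(A := f A, B := f B) = f"
  proof
    fix Z
    show "((f'(C:=undefined))(A := f A, B := f B)) Z = f Z"
      using fP CnP unfolding f'_def by (auto simp: PiE_def extensional_def)
  qed
  have "split (P',f') x y = (P,f)"
    unfolding split_def Let_def fst_conv snd_conv pcx' f'C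
    unfolding F_def[symmetric] Aback Bback FAback FBback Pback fback ..
  then show ?thesis using mer obj by simp
qed



lemma finObj: assumes G: "graph V E" shows "finite (Obj k V E)"
proof -
  have finV: "finite V" using G unfolding graph_def by simp
  have finE: "finite E" using G by (rule graph_finE)
  have "{P. connected_partition V E k P} \<subseteq> Pow (Pow V)"
    unfolding connected_partition_def by auto
  then have f1: "finite {P. connected_partition V E k P}" using finV finite_subset by blast
  have "finite (ST E S)" for S
  proof -
    have "ST E S \<subseteq> Pow E" using ST_D by blast
    then show ?thesis using finE finite_subset by blast
  qed
  moreover have "finite P" if "connected_partition V E k P" for P using that unfolding connected_partition_def by simp
  ultimately show ?thesis unfolding Obj_def using f1 by (intro finite_SigmaI finite_PiE) auto
qed

lemma cardObj: assumes G: "graph V E" shows "card (Obj k V E) = W k V E"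
proof -
  have finV: "finite V" using G unfolding graph_def by simp
  have "{P. connected_partition V E k P} \<subseteq> Pow (Pow V)"
    unfolding connected_partition_def by auto
  then have f1: "finite {P. connected_partition V E k P}" using finV finite_subset by blast
  have finE: "finite E" using G by (rule graph_finE)
  have fST: "finite (ST E S)" for S
  proof -
    have "ST E S \<subseteq> Pow E" using ST_D by blast
    then show ?thesis using finE finite_subset by blast
  qed
  have fP: "finite P" if "connected_partition V E k P" for P using that unfolding connected_partition_def by simp
  have "card (Obj k V E) = (\<Sum>P\<in>{P. connected_partition V E k P}. card (PiE P (ST E)))"
    unfolding Obj_def using f1 fST fP by (subst card_SigmaI) (auto intro!: finite_PiE)
  also have "\<dots> = W k V E" unfolding W_def spanning_tree_weight_def
    by (rule sum.cong) (auto simp: card_PiE fP ST_def num_spanning_trees_def)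
  finally show ?thesis .
qed

lemma inj_count:
  assumes finB: "finite B" and finV: "finite V"
    and ex: "\<And>q. q \<in> A \<Longrightarrow> \<exists>x y. x \<in> V \<and> y \<in> V \<and> g q x y \<in> B \<and> h (g q x y) x y = q"
  shows "card A \<le> card B * (card V * card V)"
proof -
  define c where "c q = (SOME p. fst p \<in> V \<and> snd p \<in> V \<and> g q (fst p) (snd p) \<in> B \<and> h (g q (fst p) (snd p)) (fst p) (snd p) = q)" for q
  have cP: "fst (c q) \<in> V \<and> snd (c q) \<in> V \<and> g q (fst (c q)) (snd (c q)) \<in> B \<and> h (g q (fst (c q)) (snd (c q))) (fst (c q)) (snd (c q)) = q"
    if "q \<in> A" for q
  proof -
    from ex[OF that] obtain x y where "x \<in> V \<and> y \<in> V \<and> g q x y \<in> B \<and> h (g q x y) x y = q" by blast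
    then have "\<exists>p. fst p \<in> V \<and> snd p \<in> V \<and> g q (fst p) (snd p) \<in> B \<and> h (g q (fst p) (snd p)) (fst p) (snd p) = q"
      by (intro exI[of _ "(x,y)"]) simp
    then show ?thesis unfolding c_def by (rule someI_ex)
  qed
  define phi where "phi q = (g q (fst (c q)) (snd (c q)), c q)" for q
  have "inj_on phi A"
  proof (rule inj_onI)
    fix q1 q2 assume "q1 \<in> A" "q2 \<in> A" "phi q1 = phi q2"
    then show "q1 = q2" using cP[of q1] cP[of q2] unfolding phi_def by (metis prod.inject)
  qed
  moreover have "phi ` A \<subseteq> B \<times> (V \<times> V)"
  proof -
    have "phi q \<in> B \<times> (V \<times> V)" if "q \<in> A" for q
      using cP[OF that] unfolding phi_def by (simp add: mem_Times_iff)
    then show ?thesis by blast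
  qed
  ultimately have "card A \<le> card (B \<times> (V \<times> V))" using finB finV by (intro card_inj_on_le) auto
  then show ?thesis by (simp add: card_cartesian_product)
qed

lemma stepU:
  assumes G: "graph V E" and C: "connected_graph V E" and k: "1 \<le> k"
  shows "W (Suc k) V E \<le> W k V E * (card V * card V)"
proof -
  have finV: "finite V" using G unfolding graph_def by simp
  have "card (Obj (Suc k) V E) \<le> card (Obj k V E) * (card V * card V)"
  proof (rule inj_count[OF finObj[OF G] finV, where g = merge and h = split])
    fix q assume q: "q \<in> Obj (Suc k) V E"
    obtain P f where Pf: "q = (P,f)" by (cases q)
    with q have cp: "connected_partition V E (Suc k) P" unfolding Obj_def by auto
    have finP: "finite P" "card P = Suc k" using cp unfolding connected_partition_def by auto
    then have "P \<noteq> {}" by auto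
    then obtain A where A: "A \<in> P" by blast
    have "card (P - {A}) \<noteq> 0" using finP A k by (simp add: card_Diff_singleton)
    then obtain A' where A': "A' \<in> P" "A' \<noteq> A" by (metis Diff_iff card.empty empty_iff insertI1 all_not_in_conv)
    have disj: "\<And>S1 S2. S1 \<in> P \<Longrightarrow> S2 \<in> P \<Longrightarrow> S1 \<noteq> S2 \<Longrightarrow> S1 \<inter> S2 = {}"
      and ne: "\<And>S. S \<in> P \<Longrightarrow> S \<noteq> {}" and UP: "\<Union>P = V"
      using cp unfolding connected_partition_def by auto
    obtain v where v: "v \<in> A'" using ne[OF A'(1)] by blast
    obtain u where u: "u \<in> A" using ne[OF A] by blast
    have vA: "v \<notin> A" using disj[OF A'(1) A A'(2)] v by blast
    have "u \<in> V" "v \<in> V" using u v A A' UP by auto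
    then have "(u,v) \<in> (adj {e\<in>E. e \<subseteq> V})\<^sup>*" using C unfolding connected_graph_def by blast
    then obtain a b where ab: "(a,b) \<in> adj {e\<in>E. e \<subseteq> V}" "a \<in> A" "b \<notin> A"
      using reach_exit[of u v _ A] u vA by blast
    then have e: "{a,b} \<in> E" "b \<in> V" "a \<in> V" by (auto simp: adj_def)
    then obtain B where B: "B \<in> P" "b \<in> B" using UP by blast
    have AB: "A \<noteq> B" using B ab by auto
    from merge_ok[OF G q[unfolded Pf] A B(1) AB ab(2) B(2) e(1)]
    show "\<exists>x y. x \<in> V \<and> y \<in> V \<and> merge q x y \<in> Obj k V E \<and> split (merge q x y) x y = q"
      using Pf e by blast
  qed
  then show ?thesis using cardObj[OF G] by simp
qed

lemma stepL:
  assumes G: "graph V E" and k: "k < card V"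
  shows "W k V E \<le> W (Suc k) V E * (card V * card V)"
proof -
  have finV: "finite V" using G unfolding graph_def by simp
  have "card (Obj k V E) \<le> card (Obj (Suc k) V E) * (card V * card V)"
  proof (rule inj_count[OF finObj[OF G] finV, where g = split and h = merge])
    fix q assume q: "q \<in> Obj k V E"
    obtain P f where Pf: "q = (P,f)" by (cases q)
    with q have cp: "connected_partition V E k P" and fP: "f \<in> PiE P (ST E)" unfolding Obj_def by auto
    have finP: "finite P" "card P = k" and disj: "\<And>S1 S2. S1 \<in> P \<Longrightarrow> S2 \<in> P \<Longrightarrow> S1 \<noteq> S2 \<Longrightarrow> S1 \<inter> S2 = {}"
      and ne: "\<And>S. S \<in> P \<Longrightarrow> S \<noteq> {}" and UP: "\<Union>P = V"
      using cp unfolding connected_partition_def by auto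
    have "\<exists>S\<in>P. card S \<ge> 2"
    proof (rule ccontr)
      assume "\<not> (\<exists>S\<in>P. card S \<ge> 2)"
      then have le: "\<And>S. S \<in> P \<Longrightarrow> card S \<le> 1" by force
      have finS: "\<And>S. S \<in> P \<Longrightarrow> finite S" using UP finV by (meson Union_upper finite_subset)
      have "card S = 1" if SP: "S \<in> P" for S
      proof -
        have "card S \<noteq> 0" using ne[OF SP] finS[OF SP] by simp
        then show ?thesis using le[OF SP] by linarith
      qed
      moreover have "card V = sum card P" unfolding UP[symmetric]
        by (rule card_Union_disjoint) (auto simp: pairwise_def disjnt_def disj finS)
      ultimately have "card V = card P" by simp
      then show False using finP k by simp
    qed
    then obtain S where S: "S \<in> P" "card S \<ge> 2" by blast
    have "f S \<in> ST E S" using fP S by auto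
    note D = ST_D[OF this]
    then have "card (f S) \<noteq> 0" using S by simp
    then obtain e where e: "e \<in> f S" by (metis card.empty all_not_in_conv)
    then obtain a b where ab: "e = {a,b}" "a \<in> V" "b \<in> V" using graph_edge[OF G] D by blast
    from split_ok[OF G q[unfolded Pf] S(1)] e ab
    show "\<exists>x y. x \<in> V \<and> y \<in> V \<and> split q x y \<in> Obj (Suc k) V E \<and> merge (split q x y) x y = q"
      using Pf by blast
  qed
  then show ?thesis using cardObj[OF G] by simp
qed



lemma W1: assumes G: "graph V E" and C: "connected_graph V E" shows "W 1 V E = \<tau> V E"
proof -
  have ind: "induced_edges E V = E" using G unfolding graph_def induced_edges_def by auto
  have "{P. connected_partition V E 1 P} = {{V}}"
  proof (intro equalityI subsetI)
    fix P assume "P \<in> {P. connected_partition V E 1 P}"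
    then have cp: "connected_partition V E 1 P" by simp
    then obtain X where "P = {X}" unfolding connected_partition_def by (auto simp: card_1_singleton_iff)
    then show "P \<in> {{V}}" using cp unfolding connected_partition_def by auto
  next
    fix P assume "P \<in> {{V}}"
    then have P: "P = {V}" by simp
    have "V \<noteq> {}" using C unfolding connected_graph_def by simp
    then show "P \<in> {P. connected_partition V E 1 P}"
      unfolding P connected_partition_def using C ind by auto
  qed
  then show ?thesis unfolding W_def spanning_tree_weight_def using ind by simp
qed

lemma Wn: assumes G: "graph V E" shows "1 \<le> W (card V) V E"
proof -
  have finV: "finite V" using G unfolding graph_def by simp
  define P0 where "P0 = (\<lambda>v. {v}) ` V"
  have ind: "induced_edges E {v} = {}" for v
  proof -
    have "\<not> e \<subseteq> {v}" if "e \<in> E" for e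
    proof
      assume "e \<subseteq> {v}"
      then have "card e \<le> 1" by (metis card.empty card.insert card_mono empty_iff finite.intros le_refl One_nat_def)
      then show False using G that unfolding graph_def by auto
    qed
    then show ?thesis unfolding induced_edges_def by auto
  qed
  have cs: "connected_graph {v} T" for v T unfolding connected_graph_def by auto
  have tau1: "\<tau> {v} (induced_edges E {v}) = 1" for v
  proof -
    have "{T. spanning_tree {v} (induced_edges E {v}) T} = {{}}"
      unfolding spanning_tree_def ind using cs by auto
    then show ?thesis unfolding num_spanning_trees_def by simp
  qed
  have cp: "connected_partition V E (card V) P0"
    unfolding connected_partition_def P0_def
    using cs finV by (auto simp: card_image inj_on_def)
  have finPS: "finite {P. connected_partition V E (card V) P}"
  proof -
    have "{P. connected_partition V E (card V) P} \<subseteq> Pow (Pow V)"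
      unfolding connected_partition_def by auto
    then show ?thesis using finV finite_subset by blast
  qed
  have "spanning_tree_weight E P0 = 1" unfolding spanning_tree_weight_def P0_def
    by (simp add: tau1 prod.reindex inj_on_def)
  then have "1 \<le> spanning_tree_weight E P0" by simp
  also have "\<dots> \<le> W (card V) V E" unfolding W_def
    by (rule member_le_sum) (use cp finPS in auto)
  finally show ?thesis .
qed

lemma chain:
  assumes G: "graph V E" and C: "connected_graph V E" and j: "Suc m \<le> card V"
  shows "W (Suc m) V E \<le> card V ^ (2*m) * \<tau> V E \<and> \<tau> V E \<le> card V ^ (2*m) * W (Suc m) V E"
  using j
proof (induction m)
  case 0
  then show ?case using W1[OF G C] by simp
next
  case (Suc m)
  let ?n = "card V"
  from Suc have IH: "W (Suc m) V E \<le> ?n ^ (2*m) * \<tau> V E" "\<tau> V E \<le> ?n ^ (2*m) * W (Suc m) V E" by auto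
  have U: "W (Suc (Suc m)) V E \<le> W (Suc m) V E * (?n * ?n)" using stepU[OF G C] by simp
  have L: "W (Suc m) V E \<le> W (Suc (Suc m)) V E * (?n * ?n)" using stepL[OF G] Suc.prems by simp
  have e: "?n ^ (2 * Suc m) = ?n ^ (2*m) * (?n * ?n)" by (simp add: power2_eq_square power_add)
  have "W (Suc (Suc m)) V E \<le> ?n ^ (2*m) * \<tau> V E * (?n * ?n)"
    using U IH(1) by (meson le_trans mult_le_mono1)
  moreover have "\<tau> V E \<le> ?n ^ (2*m) * (W (Suc (Suc m)) V E * (?n * ?n))"
    using L IH(2) by (meson le_trans mult_le_mono2)
  ultimately show ?case using e by (simp add: ac_simps)
qed

theorem mainTheorem8:
  fixes V :: "'a set" and E :: "'a set set" and n k :: nat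
  assumes "graph V E" and "connected_graph V E" and "card V = n"
    and "1 \<le> k" and "k \<le> n"
  shows "inverse (real n ^ (2 * (k - 1))) \<le> real (W k V E) / real (\<tau> V E)
       \<and> real (W k V E) / real (\<tau> V E) \<le> real n ^ (2 * (k - 1))"
proof -
  have G: "graph V E" and C: "connected_graph V E" using assms by auto
  have n1: "n \<ge> 1" using assms by simp
  obtain m where m: "k = Suc m" using assms by (cases k) auto
  have ck: "W k V E \<le> n ^ (2*m) * \<tau> V E \<and> \<tau> V E \<le> n ^ (2*m) * W k V E"
    using chain[OF G C, of m] m assms by simp
  have cn: "W n V E \<le> n ^ (2*(n-1)) * \<tau> V E"
    using chain[OF G C, of "n-1"] n1 assms by simp
  have "1 \<le> W n V E" using Wn[OF G] assms by simp
  then have tpos: "\<tau> V E > 0"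
  proof -
    assume w1: "1 \<le> W n V E"
    show ?thesis
    proof (rule ccontr)
      assume "\<not> 0 < \<tau> V E"
      then have "\<tau> V E = 0" by simp
      with cn w1 show False by simp
    qed
  qed
  define N where "N = real n ^ (2*m)"
  have Npos: "N > 0" using n1 N_def by simp
  have r1: "real (W k V E) \<le> N * real (\<tau> V E)" using ck N_def by (metis of_nat_le_iff of_nat_mult of_nat_power)
  have r2: "real (\<tau> V E) \<le> N * real (W k V E)" using ck N_def by (metis of_nat_le_iff of_nat_mult of_nat_power)
  have tp: "real (\<tau> V E) > 0" using tpos by simp
  have "real (W k V E) / real (\<tau> V E) \<le> N" using r1 tp by (simp add: divide_le_eq)
  moreover have "inverse N \<le> real (W k V E) / real (\<tau> V E)"
    using r2 tp Npos by (simp add: inverse_eq_divide divide_le_eq le_divide_eq mult.commute)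
  ultimately show ?thesis using m N_def by simp
qed


end
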